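(* Let $\mathcal{S}=\{S(t,s):t\ge s\}$ and $\mathcal{T}=\{T(t,s):t\ge s\}$ be continuous linear evolution processes in a Banach space $X$ admitting nonuniform exponential dichotomies with projections $\{Q^{\mathcal{S}}(t)\}$ and $\{Q^{\mathcal{T}}(t)\}$, exponents $\alpha_{\mathcal{S}}$ and $\alpha_{\mathcal{T}}$, and the same bound $K(t)\le De^{\nu|t|}$. If $\nu<\min\{\alpha_{\mathcal{T}},\alpha_{\mathcal{S}}\}$ and $$\sup_{0\le t-s\le1}\{K(t)\|T(t,s)-S(t,s)\|_{\mathcal{L}(X)}\}\le\epsilon,$$ then $$\sup_{t\in\mathbb{R}}\{K(t)^{-1}\|Q^{\mathcal{T}}(t)-Q^{\mathcal{S}}(t)\|_{\mathcal{L}(X)}\}\le\frac{e^{-\alpha_{\mathcal{S}}}+e^{-\alpha_{\mathcal{T}}}}{1-e^{-(\alpha_{\mathcal{S}}+\alpha_{\mathcal{T}})}}\,\epsilon.$$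
   Context: A continuous evolution process in a Banach space $X$ is a family $\{S(t,s): t\ge s\}$ of continuous maps $X\to X$ with $S(t,t)=Id_X$, $S(t,s)S(s,\tau)=S(t,\tau)$ for $t\ge s\ge\tau$, and $(t,s,x)\mapsto S(t,s)x$ continuous on $\{t\ge s\}\times X$; it is linear if each $S(t,s)\in\mathcal{L}(X)$. A linear evolution process admits a nonuniform exponential dichotomy if there is a family of bounded projections $\{Q(t)\}_{t\in\mathbb{R}}$ with: (i) $Q(t)S(t,s)=S(t,s)Q(s)$ for $t\ge s$; (ii) $S(t,s)|_{R(Q(s))}:R(Q(s))\to R(Q(t))$ is an isomorphism for $t\ge s$, with inverse denoted $S(s,t)$; (iii) there are a continuous $K:\mathbb{R}\to[1,\infty)$ (bound) with $K(s)\le De^{\nu|s|}$ for constants $D\ge1$, $\nu\ge0$, and $\alpha>0$ (exponent) with $\|S(t,s)(Id_X-Q(s))\|\le K(s)e^{-\alpha(t-s)}$ for $t\ge s$ and $\|S(t,s)Q(s)\|\le K(s)e^{\alpha(t-s)}$ for $t<s$. *)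

theory Defs
  imports "HOL-Analysis.Analysis"
begin

text \<open>A continuous linear evolution process on the Banach space 'a. The operator
  S t s is only meaningful for t \<ge> s; its values for t < s are ignored.\<close>
definition linear_evolution_process :: "(real \<Rightarrow> real \<Rightarrow> ('a::banach \<Rightarrow>\<^sub>L 'a)) \<Rightarrow> bool" where
  "linear_evolution_process S \<longleftrightarrow>
     (\<forall>t. S t t = id_blinfun) \<and>
     (\<forall>t s \<tau>. \<tau> \<le> s \<and> s \<le> t \<longrightarrow> S t s o\<^sub>L S s \<tau> = S t \<tau>) \<and>
     continuous_on {(t, s, x). s \<le> t} (\<lambda>(t, s, x). blinfun_apply (S t s) x)"

text \<open>For t < s the operator S(t,s)Q(s) is the inverse of
  S(s,t) restricted to R(Q(t)) applied to Q(s)x; its norm bound is stated pointwise.\<close>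
definition nonuniform_exp_dichotomy ::
  "(real \<Rightarrow> real \<Rightarrow> ('a::banach \<Rightarrow>\<^sub>L 'a)) \<Rightarrow> (real \<Rightarrow> ('a \<Rightarrow>\<^sub>L 'a)) \<Rightarrow>
   (real \<Rightarrow> real) \<Rightarrow> real \<Rightarrow> real \<Rightarrow> real \<Rightarrow> bool" where
  "nonuniform_exp_dichotomy S Q K D \<nu> \<alpha> \<longleftrightarrow>
     (\<forall>t. Q t o\<^sub>L Q t = Q t) \<and>
     (\<forall>t s. s \<le> t \<longrightarrow> Q t o\<^sub>L S t s = S t s o\<^sub>L Q s) \<and>
     (\<forall>t s. s \<le> t \<longrightarrow> bij_betw (blinfun_apply (S t s)) (range (blinfun_apply (Q s)))
                                                 (range (blinfun_apply (Q t)))) \<and>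
     continuous_on UNIV K \<and> (\<forall>s. 1 \<le> K s \<and> K s \<le> D * exp (\<nu> * \<bar>s\<bar>)) \<and>
     D \<ge> 1 \<and> \<nu> \<ge> 0 \<and> \<alpha> > 0 \<and>
     (\<forall>t s. s \<le> t \<longrightarrow> norm (S t s o\<^sub>L (id_blinfun - Q s)) \<le> K s * exp (- \<alpha> * (t - s))) \<and>
     (\<forall>t s x y. t < s \<and> y \<in> range (blinfun_apply (Q t)) \<and> S s t y = Q s x \<longrightarrow>
                 norm y \<le> K s * exp (\<alpha> * (t - s)) * norm x)"

end

theory Submission
  imports Defs
begin

lemma lep_comp:
  assumes "linear_evolution_process S" "\<tau> \<le> s" "s \<le> t"
  shows "S t s (S s \<tau> x) = S t \<tau> x"
proof -
  have "S t s o\<^sub>L S s \<tau> = S t \<tau>" using assms unfolding linear_evolution_process_def by blast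
  then show ?thesis by (metis blinfun_apply_blinfun_compose)
qed

lemma lep_id:
  assumes "linear_evolution_process S"
  shows "S t t x = x"
  using assms unfolding linear_evolution_process_def by simp

lemma ned_facts:
  assumes "nonuniform_exp_dichotomy S Q K D \<nu> \<alpha>"
  shows ned_proj: "Q t (Q t x) = Q t x"
    and ned_comm: "s \<le> t \<Longrightarrow> Q t (S t s x) = S t s (Q s x)"
    and ned_bij: "s \<le> t \<Longrightarrow> bij_betw (blinfun_apply (S t s)) (range (blinfun_apply (Q s)))
                                                 (range (blinfun_apply (Q t)))"
    and ned_K1: "1 \<le> K s" and ned_K2: "K s \<le> D * exp (\<nu> * \<bar>s\<bar>)"
    and ned_D: "D \<ge> 1" and ned_nu: "\<nu> \<ge> 0" and ned_alpha: "\<alpha> > 0"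
    and ned_stable: "s \<le> t \<Longrightarrow> norm (S t s (x - Q s x)) \<le> K s * exp (- \<alpha> * (t - s)) * norm x"
    and ned_unstable: "t < s \<Longrightarrow> y \<in> range (blinfun_apply (Q t)) \<Longrightarrow> S s t y = Q s z \<Longrightarrow>
                 norm y \<le> K s * exp (\<alpha> * (t - s)) * norm z"
proof -
  note d = assms[unfolded nonuniform_exp_dichotomy_def]
  show "Q t (Q t x) = Q t x" using d by (metis blinfun_apply_blinfun_compose)
  show "s \<le> t \<Longrightarrow> Q t (S t s x) = S t s (Q s x)" using d by (metis blinfun_apply_blinfun_compose)
  show "s \<le> t \<Longrightarrow> bij_betw (blinfun_apply (S t s)) (range (blinfun_apply (Q s)))
                                                 (range (blinfun_apply (Q t)))" using d by blast
  show "1 \<le> K s" "K s \<le> D * exp (\<nu> * \<bar>s\<bar>)" "D \<ge> 1" "\<nu> \<ge> 0" "\<alpha> > 0" using d by auto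
  show "t < s \<Longrightarrow> y \<in> range (blinfun_apply (Q t)) \<Longrightarrow> S s t y = Q s z \<Longrightarrow>
                 norm y \<le> K s * exp (\<alpha> * (t - s)) * norm z" using d by blast
  assume st: "s \<le> t"
  have "S t s (x - Q s x) = (S t s o\<^sub>L (id_blinfun - Q s)) x"
    by (simp add: blinfun.diff_left)
  also have "norm \<dots> \<le> norm (S t s o\<^sub>L (id_blinfun - Q s)) * norm x" by (rule norm_blinfun)
  also have "\<dots> \<le> K s * exp (- \<alpha> * (t - s)) * norm x"
    using d st by (intro mult_right_mono) auto
  finally show "norm (S t s (x - Q s x)) \<le> K s * exp (- \<alpha> * (t - s)) * norm x" .
qed

lemma telescope:
  assumes S: "linear_evolution_process S" and T: "linear_evolution_process T"
  shows "T (a + real N) a x - S (a + real N) a x =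
    (\<Sum>n<N. T (a + real N) (a + real n + 1)
        (T (a + real n + 1) (a + real n) (S (a + real n) a x)
         - S (a + real n + 1) (a + real n) (S (a + real n) a x)))"
proof (induction N)
  case 0
  then show ?case using lep_id[OF S] lep_id[OF T] by simp
next
  case (Suc N)
  define b where "b = a + real N"
  have e: "a + real (Suc N) = b + 1" unfolding b_def by simp
  have "T (b+1) a x - S (b+1) a x = T (b+1) b (T b a x) - S (b+1) b (S b a x)"
    using lep_comp[OF S, of a b "b+1"] lep_comp[OF T, of a b "b+1"] unfolding b_def by simp
  also have "\<dots> = T (b+1) b (T b a x - S b a x) + (T (b+1) b (S b a x) - S (b+1) b (S b a x))"
    by (simp add: blinfun.diff_right)
  also have "T b a x - S b a x = (\<Sum>n<N. T b (a + real n + 1)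
        (T (a + real n + 1) (a + real n) (S (a + real n) a x)
         - S (a + real n + 1) (a + real n) (S (a + real n) a x)))"
    using Suc unfolding b_def by simp
  also have "T (b+1) b \<dots> = (\<Sum>n<N. T (b+1) (a + real n + 1)
        (T (a + real n + 1) (a + real n) (S (a + real n) a x)
         - S (a + real n + 1) (a + real n) (S (a + real n) a x)))"
    unfolding blinfun.sum_right
    by (intro sum.cong refl lep_comp[OF T]) (auto simp: b_def)
  finally show ?case unfolding e using lep_id[OF T, of "b+1"] by (simp add: b_def add.commute)
qed

lemma lim_bound:
  fixes A B C q r :: real
  assumes H: "\<forall>N>0. A \<le> B * (\<Sum>n<N. q^n) + C * r^N"
    and "0 \<le> B" "0 \<le> q" "q < 1" "0 \<le> r" "r < 1"
  shows "A \<le> B / (1 - q)"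
proof -
  have g: "(\<Sum>n<N. q^n) \<le> 1 / (1 - q)" for N
  proof -
    have "(\<Sum>n<N. q^n) = (1 - q^N) / (1 - q)" using sum_gp_strict[of q N] assms by auto
    also have "\<dots> \<le> 1 / (1 - q)" using assms by (intro divide_right_mono) auto
    finally show ?thesis .
  qed
  have "(\<lambda>N. B / (1 - q) + C * r^N) \<longlonglongrightarrow> B / (1 - q) + C * 0"
    using assms by (intro tendsto_intros LIMSEQ_power_zero) auto
  moreover have "\<forall>N\<ge>1. A \<le> B / (1 - q) + C * r^N"
  proof (intro allI impI)
    fix N :: nat assume "N \<ge> 1"
    then have "A \<le> B * (\<Sum>n<N. q^n) + C * r^N" using H by auto
    also have "\<dots> \<le> B * (1 / (1 - q)) + C * r^N" using g assms by (intro add_right_mono mult_left_mono) auto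
    finally show "A \<le> B / (1 - q) + C * r^N" by simp
  qed
  ultimately show ?thesis by (intro LIMSEQ_le_const[where X="\<lambda>N. B / (1 - q) + C * r^N"]) auto
qed

lemma range_fix:
  assumes "nonuniform_exp_dichotomy S Q K D \<nu> \<alpha>" "v \<in> range (blinfun_apply (Q t))"
  shows "Q t v = v"
  using assms ned_proj[OF assms(1)] by auto

lemma exp_alg:
  fixes a b :: real
  shows "exp (- a * (real n + 1)) * exp (- b * real n) = exp (- a) * exp (- (b + a)) ^ n"
proof -
  have "exp (- (b + a)) ^ n = exp (real n * (- (b + a)))" by (simp add: exp_of_nat_mult)
  then show ?thesis by (simp add: mult_exp_exp algebra_simps)
qed

lemma half1:
  assumes S: "linear_evolution_process S" and T: "linear_evolution_process T"
    and dS: "nonuniform_exp_dichotomy S QS K D \<nu> \<alpha>S"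
    and dT: "nonuniform_exp_dichotomy T QT K D \<nu> \<alpha>T"
    and nu: "\<nu> < \<alpha>S + \<alpha>T"
    and eps: "\<forall>t s. 0 \<le> t - s \<and> t - s \<le> 1 \<longrightarrow> K t * norm (T t s - S t s) \<le> \<epsilon>"
  shows "norm (QT t (x - QS t x)) \<le> \<epsilon> * K t * norm x * exp (- \<alpha>T) / (1 - exp (- (\<alpha>S + \<alpha>T)))"
proof -
  define z where "z = x - QS t x"
  define u where "u = QT t z"
  define q where "q = exp (- (\<alpha>S + \<alpha>T))"
  define r where "r = exp (\<nu> - \<alpha>T - \<alpha>S)"
  have eps0: "0 \<le> \<epsilon>" using eps[rule_format, of t t] ned_K1[OF dS, of t]
    S[unfolded linear_evolution_process_def] T[unfolded linear_evolution_process_def] by simp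
  have Kt: "1 \<le> K t" by (rule ned_K1[OF dS])
  have key: "norm u \<le> (\<epsilon> * K t * norm x * exp (- \<alpha>T)) * (\<Sum>n<N. q^n)
      + (D * exp (\<nu> * \<bar>t\<bar>) * K t * norm x) * r^N" if N0: "N > 0" for N
  proof -
    define e where "e n = T (t + real n + 1) (t + real n) (S (t + real n) t z)
         - S (t + real n + 1) (t + real n) (S (t + real n) t z)" for n :: nat
    have "\<forall>n. \<exists>y. y \<in> range (blinfun_apply (QT t)) \<and> T (t + real n + 1) t y = QT (t + real n + 1) (e n)"
    proof
      fix n
      have "QT (t + real n + 1) (e n) \<in> blinfun_apply (T (t + real n + 1) t) ` range (blinfun_apply (QT t))"
        using bij_betw_imp_surj_on[OF ned_bij[OF dT, of t "t + real n + 1"]] by simp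
      then show "\<exists>y. y \<in> range (blinfun_apply (QT t)) \<and> T (t + real n + 1) t y = QT (t + real n + 1) (e n)"
        by (metis imageE)
    qed
    then obtain y where y0: "\<forall>n. y n \<in> range (blinfun_apply (QT t)) \<and> T (t + real n + 1) t (y n) = QT (t + real n + 1) (e n)"
      by (rule choice[THEN exE]) blast
    have y: "\<And>n. y n \<in> range (blinfun_apply (QT t))"
        "\<And>n. T (t + real n + 1) t (y n) = QT (t + real n + 1) (e n)" using y0 by auto
    have "QT (t + real N) (S (t + real N) t z) \<in> blinfun_apply (T (t + real N) t) ` range (blinfun_apply (QT t))"
      using bij_betw_imp_surj_on[OF ned_bij[OF dT, of t "t + real N"]] by simp
    then obtain c where c: "c \<in> range (blinfun_apply (QT t))"
        "T (t + real N) t c = QT (t + real N) (S (t + real N) t z)" by (metis imageE)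
    have fixc: "QT t c = c" by (rule range_fix[OF dT c(1)])
    have fixy: "QT t (y n) = y n" for n by (rule range_fix[OF dT y(1)])
    have mem1: "c + (\<Sum>n<N. y n) \<in> range (blinfun_apply (QT t))"
    proof -
      have "QT t (c + (\<Sum>n<N. y n)) = c + (\<Sum>n<N. y n)"
        by (simp add: blinfun.add_right blinfun.sum_right fixc fixy)
      then show ?thesis by (metis rangeI)
    qed
    have mem2: "u \<in> range (blinfun_apply (QT t))" unfolding u_def by simp
    have "T (t + real N) t u = QT (t + real N) (T (t + real N) t z)"
      unfolding u_def using ned_comm[OF dT, of t "t + real N" z] by simp
    also have "T (t + real N) t z = S (t + real N) t z + (\<Sum>n<N. T (t + real N) (t + real n + 1) (e n))"
      using telescope[OF S T, of t N z] unfolding e_def by (simp add: algebra_simps)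
    also have "QT (t + real N) \<dots> = T (t + real N) t c + (\<Sum>n<N. T (t + real N) (t + real n + 1) (QT (t + real n + 1) (e n)))"
      unfolding blinfun.add_right blinfun.sum_right c(2)
      by (intro arg_cong2[where f="(+)"] refl sum.cong ned_comm[OF dT]) auto
    also have "(\<Sum>n<N. T (t + real N) (t + real n + 1) (QT (t + real n + 1) (e n))) = (\<Sum>n<N. T (t + real N) t (y n))"
      unfolding y(2)[symmetric]
      by (intro sum.cong refl lep_comp[OF T]) auto
    also have "T (t + real N) t c + \<dots> = T (t + real N) t (c + (\<Sum>n<N. y n))"
      by (simp add: blinfun.add_right blinfun.sum_right)
    finally have eqT: "T (t + real N) t u = T (t + real N) t (c + (\<Sum>n<N. y n))" .
    have "u = c + (\<Sum>n<N. y n)"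
      using inj_onD[OF bij_betw_imp_inj_on[OF ned_bij[OF dT, of t "t + real N"]] eqT mem2 mem1] by simp
    then have "norm u \<le> norm c + norm (\<Sum>n<N. y n)" by (simp add: norm_triangle_ineq)
    also have "\<dots> \<le> norm c + (\<Sum>n<N. norm (y n))" by (intro add_left_mono norm_sum)
    finally have nu1: "norm u \<le> norm c + (\<Sum>n<N. norm (y n))" .
    have "norm (y n) \<le> (\<epsilon> * K t * norm x * exp (- \<alpha>T)) * q^n" for n
    proof -
      define w where "w = S (t + real n) t z"
      have ew: "e n = (T (t + real n + 1) (t + real n) - S (t + real n + 1) (t + real n)) w"
        unfolding e_def w_def by (simp add: blinfun.diff_left)
      have nw: "norm w \<le> K t * exp (- \<alpha>S * real n) * norm x"
        using ned_stable[OF dS, of t "t + real n" x] unfolding w_def z_def by simp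
      have ne: "norm (e n) \<le> norm (T (t + real n + 1) (t + real n) - S (t + real n + 1) (t + real n)) * norm w"
        unfolding ew by (rule norm_blinfun)
      have Kd: "K (t + real n + 1) * norm (T (t + real n + 1) (t + real n) - S (t + real n + 1) (t + real n)) \<le> \<epsilon>"
        using eps[rule_format, of "t + real n + 1" "t + real n"] by simp
      have "norm (y n) \<le> K (t + real n + 1) * exp (\<alpha>T * (t - (t + real n + 1))) * norm (e n)"
        using ned_unstable[OF dT _ y(1) y(2)] by simp
      also have "\<dots> \<le> K (t + real n + 1) * exp (\<alpha>T * (t - (t + real n + 1))) *
            (norm (T (t + real n + 1) (t + real n) - S (t + real n + 1) (t + real n)) * (K t * exp (- \<alpha>S * real n) * norm x))"
      proof -
        have "norm (e n) \<le> norm (T (t + real n + 1) (t + real n) - S (t + real n + 1) (t + real n)) * (K t * exp (- \<alpha>S * real n) * norm x)"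
          using ne nw by (meson mult_left_mono norm_ge_zero order_trans)
        then show ?thesis using ned_K1[OF dT, of "t + real n + 1"] by (intro mult_left_mono) auto
      qed
      also have "\<dots> = (K (t + real n + 1) * norm (T (t + real n + 1) (t + real n) - S (t + real n + 1) (t + real n)))
           * (K t * norm x * (exp (- \<alpha>T * (real n + 1)) * exp (- \<alpha>S * real n)))"
        by (simp add: algebra_simps)
      also have "\<dots> \<le> \<epsilon> * (K t * norm x * (exp (- \<alpha>T * (real n + 1)) * exp (- \<alpha>S * real n)))"
        using Kd Kt by (intro mult_right_mono) auto
      also have "\<dots> = (\<epsilon> * K t * norm x * exp (- \<alpha>T)) * q^n"
        unfolding exp_alg q_def by (simp add: algebra_simps)
      finally show ?thesis .
    qed
    moreover have "norm c \<le> (D * exp (\<nu> * \<bar>t\<bar>) * K t * norm x) * r^N"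
    proof -
      have "norm c \<le> K (t + real N) * exp (\<alpha>T * (t - (t + real N))) * norm (S (t + real N) t z)"
        using ned_unstable[OF dT _ c(1) c(2)] N0 by simp
      also have "\<dots> \<le> K (t + real N) * exp (\<alpha>T * (t - (t + real N))) * (K t * exp (- \<alpha>S * real N) * norm x)"
        using ned_stable[OF dS, of t "t + real N" x] ned_K1[OF dT, of "t + real N"] unfolding z_def
        by (intro mult_left_mono) auto
      also have "\<dots> \<le> (D * exp (\<nu> * \<bar>t\<bar>) * exp (\<nu> * real N)) * exp (\<alpha>T * (t - (t + real N))) * (K t * exp (- \<alpha>S * real N) * norm x)"
      proof -
        have "K (t + real N) \<le> D * exp (\<nu> * \<bar>t + real N\<bar>)" by (rule ned_K2[OF dT])
        also have "\<dots> \<le> D * (exp (\<nu> * \<bar>t\<bar>) * exp (\<nu> * real N))"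
        proof -
          have "\<bar>t + real N\<bar> \<le> \<bar>t\<bar> + real N" by arith
          then have "\<nu> * \<bar>t + real N\<bar> \<le> \<nu> * \<bar>t\<bar> + \<nu> * real N"
            using ned_nu[OF dT] by (metis distrib_left mult_left_mono)
          then show ?thesis unfolding mult_exp_exp using ned_D[OF dT]
            by (intro mult_left_mono) auto
        qed
        finally show ?thesis using Kt by (intro mult_right_mono) auto
      qed
      also have "\<dots> = (D * exp (\<nu> * \<bar>t\<bar>) * K t * norm x) * exp (real N * (\<nu> - \<alpha>T - \<alpha>S))"
        by (simp add: mult_exp_exp algebra_simps)
      also have "\<dots> = (D * exp (\<nu> * \<bar>t\<bar>) * K t * norm x) * r^N"
        unfolding r_def exp_of_nat_mult by simp
      finally show ?thesis .
    qed
    ultimately show ?thesis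
    proof -
      assume a1: "\<And>n. norm (y n) \<le> (\<epsilon> * K t * norm x * exp (- \<alpha>T)) * q^n"
        and a2: "norm c \<le> (D * exp (\<nu> * \<bar>t\<bar>) * K t * norm x) * r^N"
      have "(\<Sum>n<N. norm (y n)) \<le> (\<Sum>n<N. (\<epsilon> * K t * norm x * exp (- \<alpha>T)) * q^n)"
        by (intro sum_mono a1)
      also have "\<dots> = (\<epsilon> * K t * norm x * exp (- \<alpha>T)) * (\<Sum>n<N. q^n)" by (simp add: sum_distrib_left)
      finally show ?thesis using nu1 a2 by linarith
    qed
  qed
  have "norm u \<le> (\<epsilon> * K t * norm x * exp (- \<alpha>T)) / (1 - q)"
    using key nu eps0 Kt ned_alpha[OF dS] ned_alpha[OF dT]
    by (intro lim_bound[where C="D * exp (\<nu> * \<bar>t\<bar>) * K t * norm x" and r=r])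
       (auto simp: q_def r_def)
  then show ?thesis unfolding u_def z_def q_def .
qed

lemma exp_alg2:
  fixes a b :: real
  shows "exp (- a * real k) * exp (- b * (real k + 1)) = exp (- b) * exp (- (b + a)) ^ k"
proof -
  have "exp (- (b + a)) ^ k = exp (real k * (- (b + a)))" by (simp add: exp_of_nat_mult)
  then show ?thesis by (simp add: mult_exp_exp algebra_simps)
qed

lemma sum_reflect:
  fixes h :: "nat \<Rightarrow> real"
  shows "(\<Sum>n<N. h (N - 1 - n)) = (\<Sum>n<N. h n)"
  using sum.atLeastLessThan_rev[of h 0 N] by (simp add: lessThan_atLeast0)

lemma half2:
  assumes S: "linear_evolution_process S" and T: "linear_evolution_process T"
    and dS: "nonuniform_exp_dichotomy S QS K D \<nu> \<alpha>S"
    and dT: "nonuniform_exp_dichotomy T QT K D \<nu> \<alpha>T"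
    and nu: "\<nu> < \<alpha>S + \<alpha>T"
    and eps: "\<forall>t s. 0 \<le> t - s \<and> t - s \<le> 1 \<longrightarrow> K t * norm (T t s - S t s) \<le> \<epsilon>"
  shows "norm (QS t x - QT t (QS t x)) \<le> \<epsilon> * K t * norm x * exp (- \<alpha>S) / (1 - exp (- (\<alpha>S + \<alpha>T)))"
proof -
  define v where "v = QS t x"
  define q where "q = exp (- (\<alpha>S + \<alpha>T))"
  define r where "r = exp (\<nu> - \<alpha>T - \<alpha>S)"
  have eps0: "0 \<le> \<epsilon>" using eps[rule_format, of t t] ned_K1[OF dS, of t]
    S[unfolded linear_evolution_process_def] T[unfolded linear_evolution_process_def] by simp
  have Kt: "1 \<le> K t" by (rule ned_K1[OF dS])
  have P: "T t r y - QT t (T t r y) = T t r (y - QT r y)" if "r \<le> t" for r y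
    using ned_comm[OF dT that] by (simp add: blinfun.diff_right)
  have key: "norm (v - QT t v) \<le> (\<epsilon> * K t * norm x * exp (- \<alpha>S)) * (\<Sum>n<N. q^n)
      + (D * exp (\<nu> * \<bar>t\<bar>) * K t * norm x) * r^N" if N0: "N > 0" for N
  proof -
    define a where "a = t - real N"
    have ta: "a + real N = t" unfolding a_def by simp
    have "QS t x \<in> blinfun_apply (S t a) ` range (blinfun_apply (QS a))"
      using bij_betw_imp_surj_on[OF ned_bij[OF dS, of a t]] a_def by simp
    then obtain w where w: "w \<in> range (blinfun_apply (QS a))" "S t a w = QS t x"
      by (metis imageE)
    define g where "g n = S (a + real n) a w" for n :: nat
    define f where "f n = T (a + real n + 1) (a + real n) (g n) - S (a + real n + 1) (a + real n) (g n)" for n :: nat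
    have "T t a w - S t a w = (\<Sum>n<N. T t (a + real n + 1) (f n))"
      using telescope[OF S T, of a N w] unfolding ta f_def g_def .
    then have vdec: "v = T t a w - (\<Sum>n<N. T t (a + real n + 1) (f n))"
      unfolding v_def w(2)[symmetric] by (simp add: algebra_simps)
    have "v - QT t v = (T t a w - QT t (T t a w))
        - (\<Sum>n<N. T t (a + real n + 1) (f n) - QT t (T t (a + real n + 1) (f n)))"
      unfolding vdec by (simp add: blinfun.diff_right blinfun.sum_right sum_subtractf)
    also have "\<dots> = T t a (w - QT a w) - (\<Sum>n<N. T t (a + real n + 1) (f n - QT (a + real n + 1) (f n)))"
      using P a_def by (intro arg_cong2[where f="(-)"] P sum.cong refl) auto
    finally have "norm (v - QT t v) \<le> norm (T t a (w - QT a w)) + norm (\<Sum>n<N. T t (a + real n + 1) (f n - QT (a + real n + 1) (f n)))"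
      by (simp add: norm_triangle_ineq4)
    also have "\<dots> \<le> norm (T t a (w - QT a w)) + (\<Sum>n<N. norm (T t (a + real n + 1) (f n - QT (a + real n + 1) (f n))))"
      by (intro add_left_mono norm_sum)
    finally have nv1: "norm (v - QT t v) \<le> norm (T t a (w - QT a w)) + (\<Sum>n<N. norm (T t (a + real n + 1) (f n - QT (a + real n + 1) (f n))))" .
    define h where "h k = (\<epsilon> * K t * norm x * exp (- \<alpha>S)) * q^k" for k :: nat
    have tb: "norm (T t (a + real n + 1) (f n - QT (a + real n + 1) (f n))) \<le> h (N - 1 - n)" if nN: "n < N" for n
    proof -
      define k where "k = N - 1 - n"
      have rk: "real k = real N - real n - 1" unfolding k_def using nN by (simp add: of_nat_diff)
      have gr: "g n \<in> range (blinfun_apply (QS (a + real n)))"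
      proof -
        have "g n \<in> blinfun_apply (S (a + real n) a) ` range (blinfun_apply (QS a))"
          unfolding g_def using w(1) by blast
        then show ?thesis using bij_betw_imp_surj_on[OF ned_bij[OF dS, of a "a + real n"]] by simp
      qed
      have gS: "S t (a + real n) (g n) = QS t x"
        unfolding g_def using lep_comp[OF S, of a "a + real n" t w] w(2) nN ta by simp
      have ng: "norm (g n) \<le> K t * exp (\<alpha>S * (a + real n - t)) * norm x"
        using ned_unstable[OF dS _ gr gS] nN ta by simp
      have fw: "f n = (T (a + real n + 1) (a + real n) - S (a + real n + 1) (a + real n)) (g n)"
        unfolding f_def by (simp add: blinfun.diff_left)
      have nf: "norm (f n) \<le> norm (T (a + real n + 1) (a + real n) - S (a + real n + 1) (a + real n)) * norm (g n)"
        unfolding fw by (rule norm_blinfun)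
      have Kd: "K (a + real n + 1) * norm (T (a + real n + 1) (a + real n) - S (a + real n + 1) (a + real n)) \<le> \<epsilon>"
        using eps[rule_format, of "a + real n + 1" "a + real n"] by simp
      have "norm (T t (a + real n + 1) (f n - QT (a + real n + 1) (f n)))
          \<le> K (a + real n + 1) * exp (- \<alpha>T * (t - (a + real n + 1))) * norm (f n)"
        using ned_stable[OF dT, of "a + real n + 1" t "f n"] nN ta by simp
      also have "\<dots> \<le> K (a + real n + 1) * exp (- \<alpha>T * (t - (a + real n + 1))) *
          (norm (T (a + real n + 1) (a + real n) - S (a + real n + 1) (a + real n)) * (K t * exp (\<alpha>S * (a + real n - t)) * norm x))"
      proof -
        have "norm (f n) \<le> norm (T (a + real n + 1) (a + real n) - S (a + real n + 1) (a + real n)) * (K t * exp (\<alpha>S * (a + real n - t)) * norm x)"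
          using nf ng by (meson mult_left_mono norm_ge_zero order_trans)
        then show ?thesis using ned_K1[OF dT, of "a + real n + 1"] by (intro mult_left_mono) auto
      qed
      also have "\<dots> = (K (a + real n + 1) * norm (T (a + real n + 1) (a + real n) - S (a + real n + 1) (a + real n)))
           * (K t * norm x * (exp (- \<alpha>T * (t - (a + real n + 1))) * exp (\<alpha>S * (a + real n - t))))"
        by (simp add: algebra_simps)
      also have "\<dots> \<le> \<epsilon> * (K t * norm x * (exp (- \<alpha>T * (t - (a + real n + 1))) * exp (\<alpha>S * (a + real n - t))))"
        using Kd Kt by (intro mult_right_mono) auto
      also have "exp (- \<alpha>T * (t - (a + real n + 1))) * exp (\<alpha>S * (a + real n - t))
          = exp (- \<alpha>T * real k) * exp (- \<alpha>S * (real k + 1))"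
      proof -
        have e1: "t - (a + real n + 1) = real k" using rk ta by simp
        have e2: "a + real n - t = - (real k + 1)" using rk ta by simp
        show ?thesis unfolding e1 e2 by (simp add: algebra_simps)
      qed
      also have "\<epsilon> * (K t * norm x * \<dots>) = h k"
        unfolding exp_alg2 h_def q_def by (simp add: algebra_simps)
      finally show ?thesis unfolding k_def .
    qed
    have "(\<Sum>n<N. norm (T t (a + real n + 1) (f n - QT (a + real n + 1) (f n)))) \<le> (\<Sum>n<N. h (N - 1 - n))"
      using tb by (intro sum_mono) auto
    also have "\<dots> = (\<Sum>n<N. h n)" by (rule sum_reflect)
    also have "\<dots> = (\<epsilon> * K t * norm x * exp (- \<alpha>S)) * (\<Sum>n<N. q^n)"
      unfolding h_def by (simp add: sum_distrib_left)
    finally have sb: "(\<Sum>n<N. norm (T t (a + real n + 1) (f n - QT (a + real n + 1) (f n))))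
        \<le> (\<epsilon> * K t * norm x * exp (- \<alpha>S)) * (\<Sum>n<N. q^n)" .
    have rb: "norm (T t a (w - QT a w)) \<le> (D * exp (\<nu> * \<bar>t\<bar>) * K t * norm x) * r^N"
    proof -
      have nw: "norm w \<le> K t * exp (\<alpha>S * (a - t)) * norm x"
        using ned_unstable[OF dS _ w(1) w(2)] N0 a_def by simp
      have "norm (T t a (w - QT a w)) \<le> K a * exp (- \<alpha>T * (t - a)) * norm w"
        using ned_stable[OF dT, of a t w] a_def N0 by simp
      also have "\<dots> \<le> K a * exp (- \<alpha>T * (t - a)) * (K t * exp (\<alpha>S * (a - t)) * norm x)"
        using nw ned_K1[OF dT, of a] by (intro mult_left_mono) auto
      also have "\<dots> \<le> (D * exp (\<nu> * \<bar>t\<bar>) * exp (\<nu> * real N)) * exp (- \<alpha>T * (t - a)) * (K t * exp (\<alpha>S * (a - t)) * norm x)"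
      proof -
        have "K a \<le> D * exp (\<nu> * \<bar>a\<bar>)" by (rule ned_K2[OF dT])
        also have "\<dots> \<le> D * (exp (\<nu> * \<bar>t\<bar>) * exp (\<nu> * real N))"
        proof -
          have "\<bar>a\<bar> \<le> \<bar>t\<bar> + real N" unfolding a_def by arith
          then have "\<nu> * \<bar>a\<bar> \<le> \<nu> * \<bar>t\<bar> + \<nu> * real N"
            using ned_nu[OF dT] by (metis distrib_left mult_left_mono)
          then show ?thesis unfolding mult_exp_exp using ned_D[OF dT]
            by (intro mult_left_mono) auto
        qed
        finally show ?thesis using Kt by (intro mult_right_mono) auto
      qed
      also have "\<dots> = (D * exp (\<nu> * \<bar>t\<bar>) * K t * norm x) * exp (real N * (\<nu> - \<alpha>T - \<alpha>S))"
        unfolding a_def by (simp add: mult_exp_exp algebra_simps)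
      also have "\<dots> = (D * exp (\<nu> * \<bar>t\<bar>) * K t * norm x) * r^N"
        unfolding r_def exp_of_nat_mult by simp
      finally show ?thesis .
    qed
    show ?thesis using nv1 sb rb by linarith
  qed
  have "norm (v - QT t v) \<le> (\<epsilon> * K t * norm x * exp (- \<alpha>S)) / (1 - q)"
    using key nu eps0 Kt ned_alpha[OF dS] ned_alpha[OF dT]
    by (intro lim_bound[where C="D * exp (\<nu> * \<bar>t\<bar>) * K t * norm x" and r=r])
       (auto simp: q_def r_def)
  then show ?thesis unfolding v_def q_def .
qed

theorem mainTheorem5:
  fixes S T :: "real \<Rightarrow> real \<Rightarrow> ('a::banach \<Rightarrow>\<^sub>L 'a)"
    and QS QT :: "real \<Rightarrow> ('a \<Rightarrow>\<^sub>L 'a)"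
    and K :: "real \<Rightarrow> real"
    and D \<nu> \<alpha>S \<alpha>T \<epsilon> :: real
  assumes "linear_evolution_process S" and "linear_evolution_process T"
    and "nonuniform_exp_dichotomy S QS K D \<nu> \<alpha>S"
    and "nonuniform_exp_dichotomy T QT K D \<nu> \<alpha>T"
    and "\<nu> < min \<alpha>T \<alpha>S"
    and "\<forall>t s. 0 \<le> t - s \<and> t - s \<le> 1 \<longrightarrow> K t * norm (T t s - S t s) \<le> \<epsilon>"
  shows "\<forall>t. inverse (K t) * norm (QT t - QS t)
           \<le> (exp (- \<alpha>S) + exp (- \<alpha>T)) / (1 - exp (- (\<alpha>S + \<alpha>T))) * \<epsilon>"
proof
  fix t
  note S = assms(1) and T = assms(2) and dS = assms(3) and dT = assms(4) and eps = assms(6)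
  have aS: "\<alpha>S > 0" by (rule ned_alpha[OF dS])
  have aT: "\<alpha>T > 0" by (rule ned_alpha[OF dT])
  have nu: "\<nu> < \<alpha>S + \<alpha>T" using assms(5) aS aT by auto
  have Kt: "1 \<le> K t" by (rule ned_K1[OF dS])
  have eps0: "0 \<le> \<epsilon>" using eps[rule_format, of t t] Kt
    S[unfolded linear_evolution_process_def] T[unfolded linear_evolution_process_def] by simp
  define q where "q = exp (- (\<alpha>S + \<alpha>T))"
  have q1: "q < 1" "0 < q" unfolding q_def using aS aT by auto
  define M where "M = \<epsilon> * K t * ((exp (- \<alpha>S) + exp (- \<alpha>T)) / (1 - q))"
  have M0: "0 \<le> M" unfolding M_def using eps0 Kt q1 by (intro mult_nonneg_nonneg) auto
  have "norm (QT t - QS t) \<le> M"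
  proof (rule norm_blinfun_bound[OF M0])
    fix x
    have "(QT t - QS t) x = QT t (x - QS t x) - (QS t x - QT t (QS t x))"
      by (simp add: blinfun.diff_left blinfun.diff_right)
    then have "norm ((QT t - QS t) x) \<le> norm (QT t (x - QS t x)) + norm (QS t x - QT t (QS t x))"
      by (simp add: norm_triangle_ineq4)
    also have "\<dots> \<le> \<epsilon> * K t * norm x * exp (- \<alpha>T) / (1 - q) + \<epsilon> * K t * norm x * exp (- \<alpha>S) / (1 - q)"
      using half1[OF S T dS dT nu eps, of t x] half2[OF S T dS dT nu eps, of t x] unfolding q_def
      by (rule add_mono)
    also have "\<dots> = M * norm x" unfolding M_def using q1 by (simp add: field_simps add_divide_distrib)
    finally show "norm ((QT t - QS t) x) \<le> M * norm x" .
  qed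
  then have "inverse (K t) * norm (QT t - QS t) \<le> inverse (K t) * M"
    using Kt by (intro mult_left_mono) auto
  also have "\<dots> = (exp (- \<alpha>S) + exp (- \<alpha>T)) / (1 - exp (- (\<alpha>S + \<alpha>T))) * \<epsilon>"
  proof -
    have "K t \<noteq> 0" using Kt by auto
    then have "inverse (K t) * M = ((exp (- \<alpha>S) + exp (- \<alpha>T)) / (1 - q)) * \<epsilon>"
    proof -
      define Y where "Y = (exp (- \<alpha>S) + exp (- \<alpha>T)) / (1 - q)"
      have "inverse (K t) * M = (inverse (K t) * K t) * (Y * \<epsilon>)"
        unfolding M_def Y_def[symmetric] by (simp only: ac_simps)
      also have "\<dots> = Y * \<epsilon>" using \<open>K t \<noteq> 0\<close> by simp
      finally show ?thesis unfolding Y_def .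
    qed
    then show ?thesis unfolding q_def .
  qed
  finally show "inverse (K t) * norm (QT t - QS t)
           \<le> (exp (- \<alpha>S) + exp (- \<alpha>T)) / (1 - exp (- (\<alpha>S + \<alpha>T))) * \<epsilon>" .
qed

end
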